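(* Let $3\le n\le k$ be integers and let $X$ be the discrete-time Markov chain on $\mathbb{N}^{n-1}$ described in the context. If $k>n$, then $X$ is stable (ergodic, i.e. positive recurrent).
   Context: $\mathbb{N}=\{0,1,2,\dots\}$. $\mathbf{0}$, $\mathbf{1}$ are the all-zero and all-one vectors of dimension $n-1$, $\mathbf{e}_l$ the $l$-th unit vector. For $j=0,\dots,n-1$, $R_j$ is the set of $\mathbf{x}\in\mathbb{N}^{n-1}$ with exactly $j$ zero entries. $X$ is the Markov chain on $\mathbb{N}^{n-1}$ with nonzero transition probabilities: from $\mathbf{x}\in R_0$, to $\mathbf{x}-\mathbf{1}$ w.p. $\frac{k-(n-1)}{k}$ and to $\mathbf{x}+\mathbf{e}_l$ w.p. $\frac1k$ ($l=1,\dots,n-1$); from $\mathbf{x}\in R_j$, $1\le j\le n-2$, to $\mathbf{x}+\mathbf{e}_l$ w.p. $\frac{k-(n-1-j)}{kj}$ if $x_l=0$ and w.p. $\frac1k$ if $x_l\ge1$; from $\mathbf{0}$ to $\mathbf{e}_l$ w.p. $\frac1{n-1}$. This chain is irreducible and aperiodic. *)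

theory Defs
  imports "HOL-Analysis.Analysis"
begin

text \<open>States of the chain on N^(n-1): lists of naturals of length n-1
  (entry number l+1 of the paper is list index l).\<close>

definition states :: "nat \<Rightarrow> nat list set" where
  "states n = {x. length x = n - 1}"

text \<open>Number of zero entries; x is in R_j iff zeros x = j.\<close>
definition zeros :: "nat list \<Rightarrow> nat" where
  "zeros x = length (filter (\<lambda>a. a = 0) x)"

definition incr :: "nat list \<Rightarrow> nat \<Rightarrow> nat list" where
  "incr x l = x[l := Suc (x ! l)]"

text \<open>x - 1 (only used for x in R_0).\<close>
definition decr_all :: "nat list \<Rightarrow> nat list" where
  "decr_all x = map (\<lambda>a. a - 1) x"

text \<open>One-step transition probability P(x,y) of the chain X with parameters n, k.
  Since distinct l give distinct x + e_l, the sums over l just pick the unique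
  matching l (if any).\<close>
definition trans_prob :: "nat \<Rightarrow> nat \<Rightarrow> nat list \<Rightarrow> nat list \<Rightarrow> real" where
  "trans_prob n k x y =
    (if x \<notin> states n \<or> y \<notin> states n then 0
     else if zeros x = 0 then
       (if y = decr_all x then (real k - real (n - 1)) / real k else 0)
       + (\<Sum>l<n - 1. if y = incr x l then 1 / real k else 0)
     else if zeros x = n - 1 then
       (\<Sum>l<n - 1. if y = incr x l then 1 / real (n - 1) else 0)
     else
       (\<Sum>l<n - 1. if y = incr x l then
           (if x ! l = 0 then (real k - real (n - 1 - zeros x)) / (real k * real (zeros x))
            else 1 / real k)
         else 0))"

fun first_passage :: "nat \<Rightarrow> nat \<Rightarrow> nat \<Rightarrow> nat list \<Rightarrow> nat list \<Rightarrow> ennreal" where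
  "first_passage n k 0 x y = 0"
| "first_passage n k (Suc 0) x y = ennreal (trans_prob n k x y)"
| "first_passage n k (Suc (Suc m)) x y =
     (\<Sum>\<^sub>\<infinity>z \<in> states n - {y}. ennreal (trans_prob n k x z) * first_passage n k (Suc m) z y)"

definition positive_recurrent :: "nat \<Rightarrow> nat \<Rightarrow> nat list \<Rightarrow> bool" where
  "positive_recurrent n k x \<longleftrightarrow>
     (\<Sum>m. first_passage n k m x x) = 1 \<and>
     (\<Sum>m. of_nat m * first_passage n k m x x) < \<infinity>"

definition stable :: "nat \<Rightarrow> nat \<Rightarrow> bool" where
  "stable n k \<longleftrightarrow> (\<forall>x \<in> states n. positive_recurrent n k x)"

end

theory Submission
  imports Defs
begin

locale chain =
  fixes n k :: nat
  assumes n3: "3 \<le> n" and nk: "n < k"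
begin

definition Bset :: "nat list \<Rightarrow> nat list set" where
  "Bset x = insert (decr_all x) (incr x ` {..<n-1})"

definition EE :: "(nat list \<Rightarrow> real) \<Rightarrow> nat list \<Rightarrow> real" where
  "EE f x = (\<Sum>z\<in>Bset x. trans_prob n k x z * f z)"

definition dcoef :: "nat list \<Rightarrow> real" where
  "dcoef x = (if zeros x = 0 then (real k - real (n-1)) / real k else 0)"

definition ccoef :: "nat list \<Rightarrow> nat \<Rightarrow> real" where
  "ccoef x l = (if zeros x = 0 then 1 / real k
     else if zeros x = n - 1 then 1 / real (n-1)
     else (if x ! l = 0 then (real k - real (n - 1 - zeros x)) / (real k * real (zeros x))
           else 1 / real k))"

lemma finite_Bset[simp]: "finite (Bset x)"
  unfolding Bset_def by simp

lemma decr_in_Bset[simp]: "decr_all x \<in> Bset x"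
  unfolding Bset_def by simp

lemma incr_in_Bset[simp]: "l < n - 1 \<Longrightarrow> incr x l \<in> Bset x"
  unfolding Bset_def by simp

lemma incr_states[simp]: "x \<in> states n \<Longrightarrow> incr x l \<in> states n"
  unfolding states_def incr_def by simp

lemma decr_states[simp]: "x \<in> states n \<Longrightarrow> decr_all x \<in> states n"
  unfolding states_def decr_all_def by simp

lemma Bset_states: "x \<in> states n \<Longrightarrow> Bset x \<subseteq> states n"
  unfolding Bset_def by auto

lemma zeros_le: "x \<in> states n \<Longrightarrow> zeros x \<le> n - 1"
  unfolding zeros_def states_def by (metis length_filter_le mem_Collect_eq)

lemma tp_decomp:
  assumes "x \<in> states n" "z \<in> states n"
  shows "trans_prob n k x z = (if z = decr_all x then dcoef x else 0)
     + (\<Sum>l<n-1. if z = incr x l then ccoef x l else 0)"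
  using assms unfolding trans_prob_def dcoef_def ccoef_def by (auto intro!: sum.cong)

lemma tp_notstates: "x \<notin> states n \<Longrightarrow> trans_prob n k x z = 0"
  unfolding trans_prob_def by simp

lemma tp_out:
  assumes "x \<in> states n" "z \<notin> Bset x"
  shows "trans_prob n k x z = 0"
proof (cases "z \<in> states n")
  case True
  have "z \<noteq> decr_all x" using assms(2) by auto
  moreover have "\<And>l. l < n - 1 \<Longrightarrow> z \<noteq> incr x l" using assms(2) by auto
  ultimately show ?thesis using tp_decomp[OF assms(1) True] by simp
next
  case False
  then show ?thesis unfolding trans_prob_def by simp
qed

lemma dcoef_nonneg: "0 \<le> dcoef x"
  using nk unfolding dcoef_def by auto

lemma ccoef_nonneg: "x \<in> states n \<Longrightarrow> 0 \<le> ccoef x l"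
  using nk unfolding ccoef_def by (auto intro!: divide_nonneg_nonneg)

lemma tp_nonneg: "0 \<le> trans_prob n k x z"
proof (cases "x \<in> states n \<and> z \<in> states n")
  case True
  then show ?thesis using tp_decomp[of x z] dcoef_nonneg ccoef_nonneg
    by (auto intro!: add_nonneg_nonneg sum_nonneg)
next
  case False
  then show ?thesis unfolding trans_prob_def by auto
qed

lemma EE_formula:
  assumes x: "x \<in> states n"
  shows "EE f x = dcoef x * f (decr_all x) + (\<Sum>l<n-1. ccoef x l * f (incr x l))"
proof -
  have "EE f x = (\<Sum>z\<in>Bset x. (if z = decr_all x then dcoef x * f z else 0)
      + (\<Sum>l<n-1. if z = incr x l then ccoef x l * f z else 0))"
    unfolding EE_def
  proof (intro sum.cong refl)
    fix z assume "z \<in> Bset x"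
    then have "z \<in> states n" using Bset_states[OF x] by auto
    then show "trans_prob n k x z * f z = (if z = decr_all x then dcoef x * f z else 0)
      + (\<Sum>l<n-1. if z = incr x l then ccoef x l * f z else 0)"
      using tp_decomp[OF x] by (auto simp: distrib_right sum_distrib_right intro!: sum.cong)
  qed
  also have "\<dots> = (\<Sum>z\<in>Bset x. if z = decr_all x then dcoef x * f z else 0)
      + (\<Sum>l<n-1. \<Sum>z\<in>Bset x. if z = incr x l then ccoef x l * f z else 0)"
    by (simp only: sum.distrib sum.swap[where A="Bset x"])
  also have "\<dots> = dcoef x * f (decr_all x) + (\<Sum>l<n-1. ccoef x l * f (incr x l))"
    by (simp add: sum.delta')
  finally show ?thesis .
qed

lemma EE_notstates: "x \<notin> states n \<Longrightarrow> EE f x = 0"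
  unfolding EE_def by (simp add: tp_notstates)

lemma EE_add: "EE (\<lambda>z. f z + g z) x = EE f x + EE g x"
  unfolding EE_def by (simp add: distrib_left sum.distrib)

lemma EE_diff: "EE (\<lambda>z. f z - g z) x = EE f x - EE g x"
  unfolding EE_def by (simp add: right_diff_distrib sum_subtractf)

lemma EE_cmult: "EE (\<lambda>z. c * f z) x = c * EE f x"
  unfolding EE_def by (simp add: sum_distrib_left algebra_simps)

lemma EE_sum: "EE (\<lambda>z. \<Sum>m\<in>M. g m z) x = (\<Sum>m\<in>M. EE (g m) x)"
  unfolding EE_def by (simp add: sum_distrib_left sum.swap[where A="Bset x"])

lemma EE_mono: "(\<And>z. z \<in> Bset x \<Longrightarrow> f z \<le> g z) \<Longrightarrow> EE f x \<le> EE g x"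
  unfolding EE_def by (auto intro!: sum_mono mult_left_mono tp_nonneg)

lemma EE_nonneg: "(\<And>z. z \<in> Bset x \<Longrightarrow> 0 \<le> f z) \<Longrightarrow> 0 \<le> EE f x"
  unfolding EE_def by (auto intro!: sum_nonneg mult_nonneg_nonneg tp_nonneg)

lemma EE_single:
  assumes "z0 \<in> Bset x" "\<And>z. z \<in> Bset x \<Longrightarrow> 0 \<le> f z"
  shows "trans_prob n k x z0 * f z0 \<le> EE f x"
  unfolding EE_def using assms
  by (intro member_le_sum) (auto intro!: mult_nonneg_nonneg tp_nonneg)


lemma n1: "real (n - 1) = real n - 1" using n3 by (simp add: of_nat_diff)
lemma n1'[simp]: "real (n - Suc 0) = real n - 1" using n3 by (simp add: of_nat_diff)
lemma n1pos: "n - 1 > 0" using n3 by simp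
lemma kpos: "real k > 0" using nk by simp

lemma zeros_card: "x \<in> states n \<Longrightarrow> zeros x = card {l\<in>{..<n-1}. x ! l = 0}"
  unfolding zeros_def states_def length_filter_conv_card
  by (auto intro!: arg_cong[where f=card])

lemma zeros0_pos: "x \<in> states n \<Longrightarrow> zeros x = 0 \<Longrightarrow> l < n - 1 \<Longrightarrow> x ! l \<noteq> 0"
  unfolding zeros_def states_def
  by (metis (mono_tags, lifting) filter_empty_conv length_0_conv mem_Collect_eq nth_mem)

lemma zerosfull: "x \<in> states n \<Longrightarrow> zeros x = n - 1 \<Longrightarrow> l < n - 1 \<Longrightarrow> x ! l = 0"
  unfolding zeros_def states_def
  by (metis (mono_tags, lifting) length_filter_less mem_Collect_eq nat_less_le nth_mem)

lemma sum_if_count: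
  assumes "x \<in> states n"
  shows "(\<Sum>l<n-1. if x ! l = 0 then a else b) = b * real (n - 1) + (a - b) * real (zeros x)"
proof -
  have e: "(\<Sum>l<n-1. if x ! l = 0 then a - b else 0) = (\<Sum>l\<in>{l\<in>{..<n-1}. x ! l = 0}. a - b)"
    by (rule sum.inter_filter[symmetric]) simp
  have "(\<Sum>l<n-1. if x ! l = 0 then a else b) = (\<Sum>l<n-1. b + (if x ! l = 0 then a - b else 0))"
    by (intro sum.cong) auto
  also have "\<dots> = (\<Sum>l<n-1. b) + (\<Sum>l<n-1. if x ! l = 0 then a - b else 0)"
    by (rule sum.distrib)
  also have "\<dots> = b * real (n - 1) + (a - b) * real (zeros x)"
    unfolding e using zeros_card[OF assms] by (simp add: mult.commute)
  finally show ?thesis .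
qed

lemma coef_sum:
  assumes x: "x \<in> states n"
  shows "dcoef x + (\<Sum>l<n-1. ccoef x l) = 1"
proof (cases "zeros x = 0")
  case True
  then show ?thesis unfolding dcoef_def ccoef_def using kpos
    by (simp add: field_simps)
next
  case False
  note F = False
  show ?thesis
  proof (cases "zeros x = n - 1")
    case True
    then show ?thesis unfolding dcoef_def ccoef_def using F n1pos by simp
  next
    case False
    have j: "zeros x \<le> n - 1" using zeros_le[OF x] .
    have "(\<Sum>l<n-1. ccoef x l) = (\<Sum>l<n-1. if x ! l = 0 then
        (real k - real (n - 1 - zeros x)) / (real k * real (zeros x)) else 1 / real k)"
      unfolding ccoef_def using F False by simp
    also have "\<dots> = 1 / real k * real (n - 1) + ((real k - real (n - 1 - zeros x)) / (real k * real (zeros x)) - 1 / real k) * real (zeros x)"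
      by (rule sum_if_count[OF x])
    also have "\<dots> = 1"
      using F j kpos by (simp add: of_nat_diff field_simps)
    finally show ?thesis unfolding dcoef_def using F by simp
  qed
qed

lemma EE_one: "x \<in> states n \<Longrightarrow> EE (\<lambda>z. 1) x = 1"
  using EE_formula[of x "\<lambda>z. 1"] coef_sum[of x] by simp

lemma EE_const: "x \<in> states n \<Longrightarrow> EE (\<lambda>z. c) x = c"
  using EE_cmult[where c=c and f="\<lambda>z. 1" and x=x] EE_one[of x] by simp

lemma ccoef_x: "x \<in> states n \<Longrightarrow> l < n - 1 \<Longrightarrow> ccoef x l * real (x ! l) = real (x ! l) / real k"
  unfolding ccoef_def using zerosfull[of x l] by auto

definition SS :: "nat list \<Rightarrow> real" where "SS x = (\<Sum>i<n-1. real (x ! i))"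
definition QQ :: "nat list \<Rightarrow> real" where "QQ x = (\<Sum>i<n-1. (real (x ! i))^2)"
definition VV :: "nat list \<Rightarrow> real" where
  "VV x = real k * ((real k + real n - 1) * QQ x - 2 * (SS x)^2)"

lemma incr_nth: "x \<in> states n \<Longrightarrow> l < n - 1 \<Longrightarrow> i < n - 1 \<Longrightarrow>
   incr x l ! i = (if i = l then Suc (x ! l) else x ! i)"
  unfolding incr_def states_def by auto

lemma SS_incr: assumes "x \<in> states n" "l < n - 1" shows "SS (incr x l) = SS x + 1"
proof -
  have "SS (incr x l) = (\<Sum>i<n-1. real (x ! i) + (if i = l then 1 else 0))"
    unfolding SS_def by (intro sum.cong) (auto simp: incr_nth[OF assms])
  then show ?thesis using assms(2) unfolding SS_def by (simp add: sum.distrib)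
qed

lemma QQ_incr: assumes "x \<in> states n" "l < n - 1" shows "QQ (incr x l) = QQ x + 2 * real (x ! l) + 1"
proof -
  have "QQ (incr x l) = (\<Sum>i<n-1. (real (x ! i))^2 + (if i = l then 2 * real (x ! l) + 1 else 0))"
    unfolding QQ_def by (intro sum.cong) (auto simp: incr_nth[OF assms] power2_eq_square algebra_simps)
  then show ?thesis using assms(2) unfolding QQ_def by (simp add: sum.distrib)
qed

lemma decr_nth: "x \<in> states n \<Longrightarrow> zeros x = 0 \<Longrightarrow> i < n - 1 \<Longrightarrow>
   real (decr_all x ! i) = real (x ! i) - 1"
  unfolding decr_all_def states_def using zeros0_pos[of x i] by (auto simp: of_nat_diff states_def)

lemma SS_decr: assumes "x \<in> states n" "zeros x = 0" shows "SS (decr_all x) = SS x - (real n - 1)"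
proof -
  have "SS (decr_all x) = (\<Sum>i<n-1. real (x ! i) - 1)"
    unfolding SS_def by (intro sum.cong) (auto simp: decr_nth[OF assms])
  then show ?thesis unfolding SS_def by (simp add: sum_subtractf n1)
qed

lemma QQ_decr: assumes "x \<in> states n" "zeros x = 0"
  shows "QQ (decr_all x) = QQ x - 2 * SS x + (real n - 1)"
proof -
  have "QQ (decr_all x) = (\<Sum>i<n-1. (real (x ! i))^2 - 2 * real (x ! i) + 1)"
    unfolding QQ_def by (intro sum.cong) (auto simp: decr_nth[OF assms] power2_eq_square algebra_simps)
  then show ?thesis unfolding QQ_def SS_def by (simp add: sum.distrib sum_subtractf sum_distrib_left n1)
qed

definition Cst :: real where "Cst = (real n - 1) * ((real k - real n + 1)^2 + real k + real n - 3)"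

lemma drift_exact:
  assumes x: "x \<in> states n"
  shows "EE VV x = (if zeros x = 0
     then VV x - 2 * SS x * (real k - real n) * (real k - real n + 1) + Cst
     else VV x - 2 * SS x * (real k - real n + 1) + real k * (real k + real n - 3))"
proof -
  define A0 where "A0 = real k * ((real k + real n - 1) * (QQ x + 1) - 2 * (SS x + 1)^2)"
  define A1 where "A1 = 2 * real k * (real k + real n - 1)"
  have inc: "VV (incr x l) = A0 + A1 * real (x ! l)" if "l < n - 1" for l
    unfolding VV_def A0_def A1_def using SS_incr[OF x that] QQ_incr[OF x that]
    by (simp add: algebra_simps)
  have "(\<Sum>l<n-1. ccoef x l * VV (incr x l)) = (\<Sum>l<n-1. A0 * ccoef x l + A1 * (ccoef x l * real (x ! l)))"
    by (intro sum.cong) (auto simp: inc algebra_simps)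
  also have "\<dots> = A0 * (\<Sum>l<n-1. ccoef x l) + A1 * (SS x / real k)"
    unfolding SS_def by (simp add: sum.distrib sum_distrib_left ccoef_x[OF x] sum_divide_distrib)
  also have "\<dots> = A0 * (1 - dcoef x) + A1 * (SS x / real k)"
    using coef_sum[OF x] by (simp add: algebra_simps flip: distrib_left)
  finally have sc: "(\<Sum>l<n-1. ccoef x l * VV (incr x l)) = A0 * (1 - dcoef x) + A1 * (SS x / real k)" .
  show ?thesis
  proof (cases "zeros x = 0")
    case True
    have dV: "dcoef x * VV (decr_all x) = (real k - real n + 1) * ((real k + real n - 1) * (QQ x - 2 * SS x + (real n - 1)) - 2 * (SS x - (real n - 1))^2)"
    proof -
      have dc: "dcoef x = (real k - real n + 1)/real k"
        using True by (simp add: dcoef_def n1)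
      have vd: "VV (decr_all x) = real k * ((real k + real n - 1) * (QQ x - 2 * SS x + (real n - 1)) - 2 * (SS x - (real n - 1))^2)"
        by (simp only: VV_def SS_decr[OF x True] QQ_decr[OF x True])
      show ?thesis unfolding dc vd using kpos by simp
    qed
    have a0: "A0 * (1 - dcoef x) = (real n - 1) * ((real k + real n - 1) * (QQ x + 1) - 2 * (SS x + 1)^2)"
      unfolding dcoef_def A0_def using True kpos by (simp add: n1 field_simps)
    have a1: "A1 * (SS x / real k) = 2 * (real k + real n - 1) * SS x"
      unfolding A1_def using kpos by simp
    have "EE VV x = dcoef x * VV (decr_all x) + A0 * (1 - dcoef x) + A1 * (SS x / real k)"
      using EE_formula[OF x] sc by simp
    also have "\<dots> = VV x - 2 * SS x * (real k - real n) * (real k - real n + 1) + Cst"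
      unfolding dV a0 a1 unfolding VV_def Cst_def
      by (simp add: power2_eq_square algebra_simps)
    finally show ?thesis using True by simp
  next
    case False
    have "EE VV x = A0 + A1 * (SS x / real k)"
      using EE_formula[OF x] sc False unfolding dcoef_def by simp
    also have "\<dots> = VV x - 2 * SS x * (real k - real n + 1) + real k * (real k + real n - 3)"
      unfolding VV_def A0_def A1_def using kpos
      by (simp add: field_simps power2_eq_square)
    finally show ?thesis using False by simp
  qed
qed


lemma SS_nonneg: "0 \<le> SS x"
  unfolding SS_def by (auto intro!: sum_nonneg)

lemma VV_nonneg: assumes "x \<in> states n" shows "0 \<le> VV x"
proof -
  have cs: "(SS x)^2 \<le> QQ x * (real n - 1)"
    using Cauchy_Schwarz_ineq_sum[of "\<lambda>i. real (x ! i)" "\<lambda>i. 1" "{..<n-1}"]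
    unfolding SS_def QQ_def by simp
  have q: "0 \<le> QQ x" unfolding QQ_def by (auto intro!: sum_nonneg)
  have "2 * (SS x)^2 \<le> (real k + real n - 1) * QQ x"
  proof -
    have "2 * (SS x)^2 \<le> 2 * (real n - 1) * QQ x" using cs by (simp add: algebra_simps)
    also have "\<dots> \<le> (real k + real n - 1) * QQ x"
      using nk q by (intro mult_right_mono) auto
    finally show ?thesis .
  qed
  then show ?thesis unfolding VV_def using kpos by simp
qed

definition BB :: real where "BB = real k * (real k + real n - 3) + Cst"

lemma Cst_nonneg: "0 \<le> Cst"
proof -
  have "0 \<le> (real k - real n + 1)^2" by simp
  moreover have "0 \<le> real n - 1" using n3 by simp
  moreover have "(3::real) \<le> real k + real n" using n3 nk by simp
  ultimately show ?thesis unfolding Cst_def by (intro mult_nonneg_nonneg) linarith+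
qed

lemma BB_nonneg: "0 \<le> BB"
  unfolding BB_def using n3 nk Cst_nonneg by (intro add_nonneg_nonneg mult_nonneg_nonneg) auto

lemma drift_bound:
  assumes x: "x \<in> states n"
  shows "EE VV x \<le> VV x - 2 * SS x + BB"
proof (cases "zeros x = 0")
  case True
  have "1 \<le> (real k - real n) * (real k - real n + 1)"
  proof -
    have "1 \<le> real k - real n" using nk by linarith
    moreover have "1 \<le> real k - real n + 1" using nk by linarith
    ultimately show ?thesis using mult_mono[of 1 "real k - real n" 1 "real k - real n + 1"] by simp
  qed
  then have "2 * SS x \<le> 2 * SS x * ((real k - real n) * (real k - real n + 1))"
    using SS_nonneg[of x] mult_left_mono[of 1 _ "2 * SS x"] by simp
  moreover have "real k * (real k + real n - 3) \<ge> 0" using n3 nk by (intro mult_nonneg_nonneg) auto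
  ultimately show ?thesis using drift_exact[OF x] True unfolding BB_def by (simp add: algebra_simps)
next
  case False
  have "2 * SS x \<le> 2 * SS x * (real k - real n + 1)"
    using SS_nonneg[of x] nk mult_left_mono[of 1 "real k - real n + 1" "2 * SS x"] by simp
  then show ?thesis using drift_exact[OF x] False Cst_nonneg unfolding BB_def by (simp add: algebra_simps)
qed

subsection \<open>First passage probabilities as real numbers\<close>

fun fpr :: "nat list \<Rightarrow> nat \<Rightarrow> nat list \<Rightarrow> real" where
  "fpr y 0 x = 0"
| "fpr y (Suc 0) x = trans_prob n k x y"
| "fpr y (Suc (Suc m)) x = EE (\<lambda>z. if z = y then 0 else fpr y (Suc m) z) x"

lemma fpr_Suc: "fpr y (Suc m) x = EE (\<lambda>z. if z = y then (if m = 0 then 1 else 0) else fpr y m z) x"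
proof (cases m)
  case 0
  show ?thesis
  proof (cases "x \<in> states n")
    case True
    have "EE (\<lambda>z. if z = y then 1 else 0) x = (\<Sum>z\<in>Bset x. if z = y then trans_prob n k x z else 0)"
      unfolding EE_def by (intro sum.cong) auto
    also have "\<dots> = trans_prob n k x y"
      using tp_out[OF True, of y] by (simp add: sum.delta')
    finally show ?thesis unfolding 0 by (simp add: fpr.simps(1) cong: if_cong)
  next
    case False
    then show ?thesis unfolding 0 by (simp add: EE_notstates tp_notstates)
  qed
next
  case (Suc m')
  then show ?thesis by (simp cong: if_cong)
qed

lemma fpr_nonneg: "0 \<le> fpr y m x"
  by (induction y m x rule: fpr.induct) (auto simp: tp_nonneg intro!: EE_nonneg)

lemma infsum_EE:
  assumes g: "\<And>z. 0 \<le> g z"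
  shows "(\<Sum>\<^sub>\<infinity>z \<in> states n - {y}. ennreal (trans_prob n k x z) * ennreal (g z))
         = ennreal (EE (\<lambda>z. if z = y then 0 else g z) x)"
proof (cases "x \<in> states n")
  case True
  have "(\<Sum>\<^sub>\<infinity>z \<in> states n - {y}. ennreal (trans_prob n k x z) * ennreal (g z))
      = (\<Sum>\<^sub>\<infinity>z \<in> Bset x. ennreal (trans_prob n k x z * (if z = y then 0 else g z)))"
  proof (rule infsum_cong_neutral)
    fix z assume "z \<in> Bset x - (states n - {y})"
    then have "z = y" using Bset_states[OF True] by auto
    then show "ennreal (trans_prob n k x z * (if z = y then 0 else g z)) = 0" by simp
  next
    fix z assume "z \<in> states n - {y} - Bset x"
    then show "ennreal (trans_prob n k x z) * ennreal (g z) = 0" using tp_out[OF True] by auto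
  next
    fix z assume "z \<in> (states n - {y}) \<inter> Bset x"
    then show "ennreal (trans_prob n k x z) * ennreal (g z) = ennreal (trans_prob n k x z * (if z = y then 0 else g z))"
      using g tp_nonneg by (auto simp: ennreal_mult)
  qed
  also have "\<dots> = (\<Sum>z \<in> Bset x. ennreal (trans_prob n k x z * (if z = y then 0 else g z)))"
    by simp
  also have "\<dots> = ennreal (EE (\<lambda>z. if z = y then 0 else g z) x)"
    unfolding EE_def using g tp_nonneg by (intro sum_ennreal) (auto intro!: mult_nonneg_nonneg)
  finally show ?thesis .
next
  case False
  then show ?thesis by (simp add: EE_notstates tp_notstates)
qed

lemma fp_eq_Suc: "first_passage n k (Suc m) x y = ennreal (fpr y (Suc m) x)"
proof (induction m arbitrary: x)
  case 0
  then show ?case by simp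
next
  case (Suc m)
  have "first_passage n k (Suc (Suc m)) x y
      = (\<Sum>\<^sub>\<infinity>z \<in> states n - {y}. ennreal (trans_prob n k x z) * ennreal (fpr y (Suc m) z))"
    by (simp only: first_passage.simps Suc)
  also have "\<dots> = ennreal (fpr y (Suc (Suc m)) x)"
    by (subst infsum_EE) (auto simp: fpr_nonneg)
  finally show ?case .
qed

lemma fp_eq: "first_passage n k m x y = ennreal (fpr y m x)"
  by (cases m) (auto simp only: fp_eq_Suc, simp)


subsection \<open>Hitting estimates from a supersolution\<close>

definition FF :: "nat list \<Rightarrow> nat \<Rightarrow> nat list \<Rightarrow> real" where
  "FF y N x = (\<Sum>m<N. fpr y (Suc m) x)"

definition TT :: "nat list \<Rightarrow> nat \<Rightarrow> nat list \<Rightarrow> real" where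
  "TT y N x = (\<Sum>m<N. real (Suc m) * fpr y (Suc m) x)"

lemma EE_cong: "(\<And>z. f z = g z) \<Longrightarrow> EE f x = EE g x"
  by (subgoal_tac "f = g") auto

lemma FF_Suc: "FF y (Suc N) x = EE (\<lambda>z. if z = y then 1 else FF y N z) x"
proof -
  have "FF y (Suc N) x = (\<Sum>m<Suc N. EE (\<lambda>z. if z = y then (if m = 0 then 1 else 0) else fpr y m z) x)"
    unfolding FF_def by (simp only: fpr_Suc)
  also have "\<dots> = EE (\<lambda>z. \<Sum>m<Suc N. if z = y then (if m = 0 then 1 else 0) else fpr y m z) x"
    by (simp only: EE_sum)
  also have "\<dots> = EE (\<lambda>z. if z = y then 1 else FF y N z) x"
    by (rule EE_cong) (simp add: FF_def sum.lessThan_Suc_shift del: sum.lessThan_Suc)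
  finally show ?thesis .
qed

lemma TT_Suc: "TT y (Suc N) x = FF y (Suc N) x + EE (\<lambda>z. if z = y then 0 else TT y N z) x"
proof -
  have "TT y (Suc N) x = FF y (Suc N) x + (\<Sum>m<Suc N. real m * fpr y (Suc m) x)"
    unfolding TT_def FF_def by (simp add: sum.distrib[symmetric] algebra_simps del: sum.lessThan_Suc)
  also have "(\<Sum>m<Suc N. real m * fpr y (Suc m) x)
      = (\<Sum>m<Suc N. EE (\<lambda>z. real m * (if z = y then (if m = 0 then 1 else 0) else fpr y m z)) x)"
    by (simp only: fpr_Suc EE_cmult)
  also have "\<dots> = EE (\<lambda>z. \<Sum>m<Suc N. real m * (if z = y then (if m = 0 then 1 else 0) else fpr y m z)) x"
    by (simp only: EE_sum)
  also have "\<dots> = EE (\<lambda>z. if z = y then 0 else TT y N z) x"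
    by (rule EE_cong) (simp add: TT_def sum.lessThan_Suc_shift del: sum.lessThan_Suc)
  finally show ?thesis .
qed

lemma FF_mono: "FF y N x \<le> FF y (Suc N) x"
  unfolding FF_def using fpr_nonneg by simp

lemma FF_mono': "j \<le> N \<Longrightarrow> FF y j x \<le> FF y N x"
proof (induction N)
  case 0
  then show ?case by simp
next
  case (Suc N)
  show ?case
  proof (cases "j = Suc N")
    case False
    then have "j \<le> N" using Suc.prems by simp
    then show ?thesis using Suc.IH FF_mono[of y N x] by linarith
  qed simp
qed

lemma ccoef_ge: assumes x: "x \<in> states n" shows "1 / real k \<le> ccoef x l"
proof -
  have j: "zeros x \<le> n - 1" using zeros_le[OF x] .
  show ?thesis
  proof (cases "zeros x = 0")
    case True then show ?thesis unfolding ccoef_def by simp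
  next
    case F: False
    show ?thesis
    proof (cases "zeros x = n - 1")
      case True
      have "real (n - 1) \<le> real k" using nk by simp
      then show ?thesis unfolding ccoef_def using F True n1pos
        by (simp add: frac_le del: n1')
    next
      case False
      have jpos: "real (zeros x) > 0" using F by simp
      have "real (zeros x) \<le> real k - real (n - 1 - zeros x)"
        using j nk by (simp add: of_nat_diff)
      then have "1 / real k \<le> (real k - real (n - 1 - zeros x)) / (real k * real (zeros x))"
        using jpos kpos by (simp add: field_simps)
      then show ?thesis unfolding ccoef_def using F False by simp
    qed
  qed
qed

lemma tp_incr_ge:
  assumes x: "x \<in> states n" and l: "l < n - 1"
  shows "1 / real k \<le> trans_prob n k x (incr x l)"
proof -
  have "ccoef x l = (if incr x l = incr x l then ccoef x l else 0)" by simp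
  also have "\<dots> \<le> (\<Sum>l'<n-1. if incr x l = incr x l' then ccoef x l' else 0)"
    using l ccoef_nonneg[OF x] by (intro member_le_sum) auto
  also have "\<dots> \<le> trans_prob n k x (incr x l)"
    using tp_decomp[OF x incr_states[OF x]] dcoef_nonneg by simp
  finally show ?thesis using ccoef_ge[OF x, of l] by simp
qed

lemma tp_decr_ge:
  assumes x: "x \<in> states n" and z: "zeros x = 0"
  shows "1 / real k \<le> trans_prob n k x (decr_all x)"
proof -
  have "1 / real k \<le> dcoef x"
    unfolding dcoef_def using z nk kpos by (simp add: n1 frac_le)
  also have "\<dots> \<le> trans_prob n k x (decr_all x)"
    using tp_decomp[OF x decr_states[OF x]] ccoef_nonneg[OF x] by (simp add: sum_nonneg)
  finally show ?thesis .
qed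

subsection \<open>A path towards a fixed target state\<close>

definition tt :: "nat list \<Rightarrow> nat list \<Rightarrow> nat" where
  "tt y x = Max (insert 1 ((\<lambda>i. x ! i - y ! i) ` {..<n-1}))"

definition fullp :: "nat list \<Rightarrow> nat list \<Rightarrow> bool" where
  "fullp y x = (\<forall>i<n-1. x ! i = y ! i + tt y x)"

definition ss :: "nat list \<Rightarrow> nat list \<Rightarrow> nat list" where
  "ss y x = (if fullp y x then decr_all x
     else incr x (LEAST i. i < n - 1 \<and> x ! i < y ! i + tt y x))"

definition rho :: "nat list \<Rightarrow> nat list \<Rightarrow> nat" where
  "rho y x = tt y x + (\<Sum>i<n-1. y ! i + tt y x - x ! i)"

lemma tt_ge: "i < n - 1 \<Longrightarrow> x ! i - y ! i \<le> tt y x"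
  unfolding tt_def by (intro Max_ge) auto

lemma tt_ge1: "1 \<le> tt y x"
  unfolding tt_def by (intro Max_ge) auto

lemma tt_in: "tt y x = 1 \<or> (\<exists>i<n-1. x ! i - y ! i = tt y x)"
proof -
  have "tt y x \<in> insert 1 ((\<lambda>i. x ! i - y ! i) ` {..<n-1})"
    unfolding tt_def by (intro Max_in) auto
  then show ?thesis by auto
qed

lemma le_tt: "i < n - 1 \<Longrightarrow> x ! i \<le> y ! i + tt y x"
  using tt_ge[of i x y] by arith

lemma tt_eqI:
  assumes "\<And>i. i < n - 1 \<Longrightarrow> x ! i - y ! i \<le> t" "1 \<le> t"
    "t = 1 \<or> (\<exists>i<n-1. x ! i - y ! i = t)"
  shows "tt y x = t"
  unfolding tt_def using assms by (intro Max_eqI) auto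

lemma zeros0I: "x \<in> states n \<Longrightarrow> (\<And>i. i < n - 1 \<Longrightarrow> x ! i \<noteq> 0) \<Longrightarrow> zeros x = 0"
  unfolding zeros_def states_def by (auto simp: filter_empty_conv in_set_conv_nth)

lemma path_step:
  assumes x: "x \<in> states n" and y: "y \<in> states n"
  shows "ss y x \<in> Bset x \<and> 1 / real k \<le> trans_prob n k x (ss y x)
         \<and> (ss y x = y \<or> rho y (ss y x) < rho y x)"
proof (cases "fullp y x")
  case True
  define t where "t = tt y x"
  have xi: "\<And>i. i < n - 1 \<Longrightarrow> x ! i = y ! i + t" using True unfolding fullp_def t_def by auto
  have t1: "1 \<le> t" unfolding t_def by (rule tt_ge1)
  have z: "zeros x = 0" using xi t1 by (intro zeros0I[OF x]) fastforce
  have lx: "length x = n - 1" and ly: "length y = n - 1" using x y unfolding states_def by auto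
  have di: "\<And>i. i < n - 1 \<Longrightarrow> decr_all x ! i = y ! i + (t - 1)"
    unfolding decr_all_def using xi lx t1 by auto
  have ssx: "ss y x = decr_all x" unfolding ss_def using True by simp
  have "ss y x = y \<or> rho y (ss y x) < rho y x"
  proof (cases "t = 1")
    case True
    have len: "length (decr_all x) = n - 1" by (simp add: decr_all_def lx)
    have "decr_all x = y"
      by (rule nth_equalityI) (auto simp: len ly di True)
    then show ?thesis using ssx by simp
  next
    case False
    have ex: "\<exists>i<n-1. decr_all x ! i - y ! i = t - 1"
      using di[of 0] n1pos by (intro exI[of _ 0]) auto
    have tt': "tt y (decr_all x) = t - 1"
      using ex False t1 by (intro tt_eqI) (auto simp: di)
    have "rho y (decr_all x) = t - 1" unfolding rho_def tt' by (simp add: di)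
    moreover have "rho y x \<ge> t" unfolding rho_def t_def by simp
    ultimately have "rho y (decr_all x) < rho y x" using t1 by linarith
    then show ?thesis using ssx by simp
  qed
  then show ?thesis using ssx tp_decr_ge[OF x z] by simp
next
  case False
  define t where "t = tt y x"
  have "\<exists>i. i < n - 1 \<and> x ! i < y ! i + t"
    using False le_tt[of _ x y] unfolding fullp_def t_def by (meson le_neq_implies_less)
  then have i0: "(LEAST i. i < n - 1 \<and> x ! i < y ! i + t) < n - 1 \<and>
      x ! (LEAST i. i < n - 1 \<and> x ! i < y ! i + t) < y ! (LEAST i. i < n - 1 \<and> x ! i < y ! i + t) + t"
    by (rule LeastI_ex)
  define i0 where "i0 = (LEAST i. i < n - 1 \<and> x ! i < y ! i + t)"
  have i0n: "i0 < n - 1" and i0x: "x ! i0 < y ! i0 + t" using i0 unfolding i0_def by auto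
  have ssx: "ss y x = incr x i0" unfolding ss_def i0_def t_def using False by simp
  have xi': "\<And>j. j < n - 1 \<Longrightarrow> incr x i0 ! j = (if j = i0 then Suc (x ! i0) else x ! j)"
    using incr_nth[OF x i0n] .
  have t1: "1 \<le> t" unfolding t_def by (rule tt_ge1)
  have tt': "tt y (incr x i0) = t"
  proof (rule tt_eqI)
    fix j assume "j < n - 1"
    moreover have "x ! j - y ! j \<le> t" using tt_ge[of j x y] \<open>j < n - 1\<close> unfolding t_def by simp
    ultimately show "incr x i0 ! j - y ! j \<le> t"
      using xi' i0x by auto
  next
    show "1 \<le> t" by (rule t1)
  next
    show "t = 1 \<or> (\<exists>j<n-1. incr x i0 ! j - y ! j = t)"
    proof (cases "t = 1")
      case False
      then obtain j where j: "j < n - 1" "x ! j - y ! j = t" using tt_in[of y x] unfolding t_def by auto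
      have "j \<noteq> i0"
      proof
        assume "j = i0"
        then have "x ! i0 - y ! i0 = t" using j(2) by simp
        then show False using i0x t1 by arith
      qed
      then show ?thesis using j xi' by auto
    qed simp
  qed
  have sumeq: "(\<Sum>j<n-1. y ! j + t - x ! j) = (\<Sum>j<n-1. y ! j + t - incr x i0 ! j) + 1"
  proof -
    have "(\<Sum>j<n-1. y ! j + t - x ! j) = (\<Sum>j<n-1. (y ! j + t - incr x i0 ! j) + (if j = i0 then 1 else 0))"
      using i0x by (intro sum.cong) (auto simp: xi')
    also have "\<dots> = (\<Sum>j<n-1. y ! j + t - incr x i0 ! j) + 1"
      using i0n by (simp add: sum.distrib)
    finally show ?thesis .
  qed
  have "rho y (incr x i0) < rho y x"
    unfolding rho_def tt' t_def[symmetric] using sumeq by simp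
  then show ?thesis using ssx tp_incr_ge[OF x i0n] i0n by simp
qed

end

locale chain_super = chain +
  fixes y :: "nat list" and W :: "nat list \<Rightarrow> real"
  assumes y: "y \<in> states n"
    and W_nonneg: "\<And>x. x \<in> states n \<Longrightarrow> 0 \<le> W x"
    and W_super: "\<And>x. x \<in> states n \<Longrightarrow> 1 + EE (\<lambda>z. if z = y then 0 else W z) x \<le> W x"
begin

lemma FF_le1: "x \<in> states n \<Longrightarrow> FF y N x \<le> 1"
proof (induction N arbitrary: x)
  case 0
  then show ?case by (simp add: FF_def)
next
  case (Suc N)
  have "FF y (Suc N) x \<le> EE (\<lambda>z. 1) x"
    unfolding FF_Suc using Bset_states[OF Suc.prems] Suc.IH by (intro EE_mono) auto
  then show ?case using EE_one[OF Suc.prems] by simp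
qed

lemma GG_sum: "x \<in> states n \<Longrightarrow> (\<Sum>j<N. 1 - FF y j x) \<le> W x"
proof (induction N arbitrary: x)
  case 0
  then show ?case using W_nonneg by simp
next
  case (Suc N)
  have g: "1 - FF y (Suc j) z = EE (\<lambda>z. if z = y then 0 else 1 - FF y j z) z" if "z \<in> states n" for j z
  proof -
    have "1 - FF y (Suc j) z = EE (\<lambda>z. 1) z - EE (\<lambda>z. if z = y then 1 else FF y j z) z"
      using EE_one[OF that] FF_Suc by simp
    also have "\<dots> = EE (\<lambda>z. if z = y then 0 else 1 - FF y j z) z"
      by (simp only: EE_diff[symmetric]) (rule EE_cong, simp)
    finally show ?thesis .
  qed
  have e1: "(\<Sum>j<N. EE (\<lambda>z. if z = y then 0 else 1 - FF y j z) x)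
       = EE (\<lambda>z. \<Sum>j<N. if z = y then 0 else 1 - FF y j z) x"
    by (rule EE_sum[symmetric])
  have e2: "EE (\<lambda>z. \<Sum>j<N. if z = y then 0 else 1 - FF y j z) x = EE (\<lambda>z. if z = y then 0 else (\<Sum>j<N. 1 - FF y j z)) x"
    by (rule EE_cong) simp
  have "(\<Sum>j<Suc N. 1 - FF y j x) = 1 + (\<Sum>j<N. 1 - FF y (Suc j) x)"
    by (simp add: sum.lessThan_Suc_shift FF_def del: sum.lessThan_Suc)
  also have "\<dots> = 1 + (\<Sum>j<N. EE (\<lambda>z. if z = y then 0 else 1 - FF y j z) x)"
    using g[OF Suc.prems] by simp
  also have "\<dots> = 1 + EE (\<lambda>z. if z = y then 0 else (\<Sum>j<N. 1 - FF y j z)) x"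
    using e1 e2 by simp
  also have "\<dots> \<le> 1 + EE (\<lambda>z. if z = y then 0 else W z) x"
    using Bset_states[OF Suc.prems] Suc.IH by (auto intro!: EE_mono)
  also have "\<dots> \<le> W x" using W_super[OF Suc.prems] .
  finally show ?case .
qed

lemma GG_bound: "x \<in> states n \<Longrightarrow> real N * (1 - FF y N x) \<le> W x"
proof -
  assume x: "x \<in> states n"
  have "real N * (1 - FF y N x) = (\<Sum>j<N. 1 - FF y N x)" by simp
  also have "\<dots> \<le> (\<Sum>j<N. 1 - FF y j x)"
    by (intro sum_mono) (auto intro: FF_mono')
  also have "\<dots> \<le> W x" using GG_sum[OF x] .
  finally show ?thesis .
qed

lemma FF_lim: "(\<lambda>N. FF y N y) \<longlonglongrightarrow> 1"
proof (rule tendsto_sandwich[where f="\<lambda>N. 1 - W y / real N" and h="\<lambda>N. 1"])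
  show "\<forall>\<^sub>F N in sequentially. 1 - W y / real N \<le> FF y N y"
    unfolding eventually_sequentially
  proof (intro exI allI impI)
    fix N :: nat assume "1 \<le> N"
    then have "real N * (1 - FF y N y) \<le> W y" "real N > 0" using GG_bound[OF y] by auto
    then show "1 - W y / real N \<le> FF y N y" by (simp add: field_simps)
  qed
  show "\<forall>\<^sub>F N in sequentially. FF y N y \<le> 1" using FF_le1[OF y] by simp
  show "(\<lambda>N. 1 - W y / real N) \<longlonglongrightarrow> 1"
    using tendsto_diff[OF tendsto_const lim_const_over_n[of "W y"], of 1] by simp
  show "(\<lambda>N. 1::real) \<longlonglongrightarrow> 1" by simp
qed

lemma fpr_sums: "(\<lambda>m. fpr y m y) sums 1"
proof -
  have "(\<lambda>m. fpr y (Suc m) y) sums 1"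
    unfolding sums_def using FF_lim unfolding FF_def .
  then show ?thesis using sums_Suc_iff[of "\<lambda>m. fpr y m y" 1] by simp
qed

lemma TT_le: "x \<in> states n \<Longrightarrow> TT y N x \<le> W x"
proof (induction N arbitrary: x)
  case 0
  then show ?case using W_nonneg by (simp add: TT_def)
next
  case (Suc N)
  have "TT y (Suc N) x \<le> 1 + EE (\<lambda>z. if z = y then 0 else TT y N z) x"
    unfolding TT_Suc using FF_le1[OF Suc.prems] by simp
  also have "\<dots> \<le> 1 + EE (\<lambda>z. if z = y then 0 else W z) x"
    using Bset_states[OF Suc.prems] Suc.IH by (auto intro!: EE_mono)
  also have "\<dots> \<le> W x" using W_super[OF Suc.prems] .
  finally show ?case .
qed

lemma time_summable: "summable (\<lambda>m. real m * fpr y m y)"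
proof -
  have "summable (\<lambda>m. real (Suc m) * fpr y (Suc m) y)"
  proof (rule bounded_imp_summable)
    fix m show "0 \<le> real (Suc m) * fpr y (Suc m) y" using fpr_nonneg by simp
  next
    fix N
    have "(\<Sum>m\<le>N. real (Suc m) * fpr y (Suc m) y) = TT y (Suc N) y"
      unfolding TT_def using lessThan_Suc_atMost by simp
    then show "(\<Sum>m\<le>N. real (Suc m) * fpr y (Suc m) y) \<le> W y" using TT_le[OF y] by simp
  qed
  then show ?thesis using summable_Suc_iff[of "\<lambda>m. real m * fpr y m y"] by simp
qed

lemma pos_rec: "positive_recurrent n k y"
proof -
  have s1: "summable (\<lambda>m. fpr y m y)" and v1: "(\<Sum>m. fpr y m y) = 1"
    using fpr_sums by (auto simp: sums_iff)
  have "(\<Sum>m. first_passage n k m y y) = (\<Sum>m. ennreal (fpr y m y))"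
    by (simp add: fp_eq)
  also have "\<dots> = ennreal (\<Sum>m. fpr y m y)"
    using s1 fpr_nonneg by (intro suminf_ennreal2) auto
  finally have A: "(\<Sum>m. first_passage n k m y y) = 1" using v1 by simp
  have "(\<Sum>m. of_nat m * first_passage n k m y y) = (\<Sum>m. ennreal (real m * fpr y m y))"
    by (simp add: fp_eq ennreal_mult' ennreal_of_nat_eq_real_of_nat)
  also have "\<dots> = ennreal (\<Sum>m. real m * fpr y m y)"
    using time_summable fpr_nonneg by (intro suminf_ennreal2) auto
  finally have B: "(\<Sum>m. of_nat m * first_passage n k m y y) < \<infinity>" by simp
  show ?thesis unfolding positive_recurrent_def using A B by simp
qed

end

context chain
begin

lemma BB_ge1: "1 \<le> BB"
proof -
  have "1 \<le> real k * (real k + real n - 3)"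
    using nk n3 by (intro order.trans[OF _ mult_mono[of 1 "real k" 1 "real k + real n - 3"]]) auto
  then show ?thesis unfolding BB_def using Cst_nonneg by simp
qed

lemma Cset_finite: "finite {x \<in> states n. SS x \<le> BB}"
proof (rule finite_subset)
  show "{x \<in> states n. SS x \<le> BB} \<subseteq> {xs. set xs \<subseteq> {0..nat \<lceil>BB\<rceil>} \<and> length xs = n - 1}"
  proof
    fix x assume "x \<in> {x \<in> states n. SS x \<le> BB}"
    then have x: "x \<in> states n" and s: "SS x \<le> BB" by auto
    have "a \<le> nat \<lceil>BB\<rceil>" if "a \<in> set x" for a
    proof -
      obtain i where i: "i < length x" "x ! i = a" using \<open>a \<in> set x\<close> by (auto simp: in_set_conv_nth)
      then have "i < n - 1" using x unfolding states_def by simp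
      then have "real (x ! i) \<le> SS x" unfolding SS_def by (intro member_le_sum) auto
      then have "real a \<le> BB" using s i by simp
      then show ?thesis by linarith
    qed
    then show "x \<in> {xs. set xs \<subseteq> {0..nat \<lceil>BB\<rceil>} \<and> length xs = n - 1}"
      using x unfolding states_def by auto
  qed
  show "finite {xs. set xs \<subseteq> {0..nat \<lceil>BB\<rceil>} \<and> length xs = n - 1}"
    by (rule finite_lists_length_eq) simp
qed

lemma super_exists:
  assumes y: "y \<in> states n"
  shows "\<exists>W. (\<forall>x\<in>states n. 0 \<le> W x) \<and>
             (\<forall>x\<in>states n. 1 + EE (\<lambda>z. if z = y then 0 else W z) x \<le> W x)"
proof -
  define Cset where "Cset = {x \<in> states n. SS x \<le> BB}"
  define D where "D = (\<Sum>x\<in>Cset. rho y x)"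
  define L where "L = real k * (BB + 2)"
  define u where "u x = (if rho y x \<le> D then L ^ (D - rho y x) else 0)" for x
  define c where "c = real k * (1 + BB + L ^ D)"
  define W0 where "W0 x = VV x + c - u x" for x
  have L1: "1 \<le> L" unfolding L_def using kpos BB_nonneg nk
    by (intro order.trans[OF _ mult_mono[of 1 "real k" 1 "BB + 2"]]) auto
  have u_nonneg: "0 \<le> u x" for x unfolding u_def using L1 by simp
  have u_le: "u x \<le> L ^ D" for x unfolding u_def using L1 by (auto intro: power_increasing)
  have u_ge1: "rho y x \<le> D \<Longrightarrow> 1 \<le> u x" for x unfolding u_def using L1 by simp
  have c_ge: "L ^ D \<le> c"
  proof -
    have "L ^ D \<le> 1 * (1 + BB + L ^ D)" using BB_nonneg by simp
    also have "\<dots> \<le> c" unfolding c_def using nk BB_nonneg L1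
      by (intro mult_right_mono) auto
    finally show ?thesis .
  qed
  have c_nonneg: "0 \<le> c" using c_ge L1 by (meson order.trans zero_le_one one_le_power)
  have W0_nonneg: "0 \<le> W0 x" if "x \<in> states n" for x
    unfolding W0_def using VV_nonneg[OF that] u_le[of x] c_ge by simp
  have W0_super: "1 + EE (\<lambda>z. if z = y then 0 else W0 z) x \<le> W0 x"
    if x: "x \<in> states n" and xy: "x \<noteq> y" for x
  proof (cases "rho y x \<le> D")
    case False
    have "x \<notin> Cset"
    proof
      assume "x \<in> Cset"
      then have "rho y x \<le> D" unfolding D_def using Cset_finite unfolding Cset_def
        by (intro member_le_sum) auto
      then show False using False by simp
    qed
    then have S: "BB < SS x" using x unfolding Cset_def by auto
    have ux: "u x = 0" unfolding u_def using False by simp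
    have "EE (\<lambda>z. if z = y then 0 else W0 z) x \<le> EE (\<lambda>z. VV z + c) x"
    proof (rule EE_mono)
      fix z assume "z \<in> Bset x"
      then have z: "z \<in> states n" using Bset_states[OF x] by auto
      show "(if z = y then 0 else W0 z) \<le> VV z + c"
        unfolding W0_def using VV_nonneg[OF z] c_nonneg u_nonneg[of z] by auto
    qed
    also have "\<dots> = EE VV x + c" using EE_add[of VV "\<lambda>z. c" x] EE_const[OF x] by simp
    also have "\<dots> \<le> VV x - 2 * SS x + BB + c" using drift_bound[OF x] by simp
    also have "\<dots> \<le> VV x - 1 + c" using S BB_ge1 by simp
    finally show ?thesis unfolding W0_def ux by simp
  next
    case True
    define h where "h z = (if z = y then 0 else c - u z)" for z
    obtain pstep: "ss y x \<in> Bset x" "1 / real k \<le> trans_prob n k x (ss y x)"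
      "ss y x = y \<or> rho y (ss y x) < rho y x"
      using path_step[OF x y] by blast
    have ch: "0 \<le> c - h z" for z unfolding h_def using c_nonneg u_nonneg[of z] by auto
    have key: "1 + BB + u x \<le> (1 / real k) * (c - h (ss y x))"
    proof (cases "ss y x = y")
      case True
      then have "(1 / real k) * (c - h (ss y x)) = 1 + BB + L ^ D"
        unfolding h_def c_def using kpos by simp
      then show ?thesis using u_le[of x] by simp
    next
      case False
      then have lt: "rho y (ss y x) < rho y x" using pstep(3) by simp
      then have "D - rho y (ss y x) \<ge> Suc (D - rho y x)" using True by simp
      then have "L ^ Suc (D - rho y x) \<le> L ^ (D - rho y (ss y x))"
        using L1 by (intro power_increasing) auto
      then have "L * u x \<le> u (ss y x)"
        unfolding u_def using True lt by simp
      moreover have "c - h (ss y x) = u (ss y x)" unfolding h_def using False by simp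
      ultimately have "(1 / real k) * L * u x \<le> (1 / real k) * (c - h (ss y x))"
        using kpos by (simp add: divide_right_mono)
      moreover have "(1 / real k) * L * u x = (BB + 2) * u x" unfolding L_def using kpos by simp
      moreover have "1 + BB + u x \<le> (BB + 2) * u x"
        using u_ge1[OF True] BB_nonneg by (simp add: algebra_simps)
          (metis add.commute add_le_cancel_left mult_le_cancel_left1 mult.commute le_add_same_cancel2 order_trans BB_nonneg linorder_not_le mult_left_mono)
      ultimately show ?thesis by linarith
    qed
    have "EE (\<lambda>z. if z = y then 0 else W0 z) x \<le> EE (\<lambda>z. VV z + h z) x"
    proof (rule EE_mono)
      fix z assume "z \<in> Bset x"
      then have z: "z \<in> states n" using Bset_states[OF x] by auto
      show "(if z = y then 0 else W0 z) \<le> VV z + h z"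
        unfolding W0_def h_def using VV_nonneg[OF z] by auto
    qed
    also have "\<dots> = EE VV x + EE h x" by (rule EE_add)
    also have "EE h x = EE (\<lambda>z. c) x - EE (\<lambda>z. c - h z) x"
      by (simp add: EE_diff)
    also have "\<dots> = c - EE (\<lambda>z. c - h z) x" using EE_const[OF x] by simp
    also have "trans_prob n k x (ss y x) * (c - h (ss y x)) \<le> EE (\<lambda>z. c - h z) x"
      using pstep(1) ch by (intro EE_single) auto
    then have "c - EE (\<lambda>z. c - h z) x \<le> c - (1 / real k) * (c - h (ss y x))"
      using pstep(2) ch[of "ss y x"] mult_right_mono[OF pstep(2) ch[of "ss y x"]] by linarith
    finally have "EE (\<lambda>z. if z = y then 0 else W0 z) x \<le> EE VV x + (c - (1 / real k) * (c - h (ss y x)))"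
      by simp
    also have "\<dots> \<le> VV x + BB + (c - (1 / real k) * (c - h (ss y x)))"
      using drift_bound[OF x] SS_nonneg[of x] by simp
    finally show ?thesis unfolding W0_def using key by simp
  qed
  define W where "W x = (if x = y then 1 + EE (\<lambda>z. if z = y then 0 else W0 z) y else W0 x)" for x
  have EW: "EE (\<lambda>z. if z = y then 0 else W z) x = EE (\<lambda>z. if z = y then 0 else W0 z) x" for x
    by (rule EE_cong) (simp add: W_def)
  have "\<forall>x\<in>states n. 0 \<le> W x"
  proof
    fix x assume x: "x \<in> states n"
    show "0 \<le> W x"
    proof (cases "x = y")
      case True
      have "0 \<le> EE (\<lambda>z. if z = y then 0 else W0 z) y"
        using Bset_states[OF y] W0_nonneg by (intro EE_nonneg) auto
      then show ?thesis using True W_def by simp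
    next
      case False
      then show ?thesis using W0_nonneg[OF x] W_def by simp
    qed
  qed
  moreover have "\<forall>x\<in>states n. 1 + EE (\<lambda>z. if z = y then 0 else W z) x \<le> W x"
  proof
    fix x assume x: "x \<in> states n"
    show "1 + EE (\<lambda>z. if z = y then 0 else W z) x \<le> W x"
    proof (cases "x = y")
      case True
      have "W y = 1 + EE (\<lambda>z. if z = y then 0 else W0 z) y" by (simp add: W_def)
      then show ?thesis using True EW[of y] by simp
    next
      case False
      then show ?thesis unfolding EW using W0_super[OF x False] W_def by simp
    qed
  qed
  ultimately show ?thesis by blast
qed

end

theorem proposition7p1:
  fixes n k :: nat
  assumes "3 \<le> n" and "n \<le> k" and "k > n"
  shows "stable n k"
proof -
  interpret chain n k using assms by unfold_locales auto
  show ?thesis unfolding stable_def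
  proof
    fix y assume y: "y \<in> states n"
    obtain W where W: "\<forall>x\<in>states n. 0 \<le> W x"
      "\<forall>x\<in>states n. 1 + EE (\<lambda>z. if z = y then 0 else W z) x \<le> W x"
      using super_exists[OF y] by blast
    interpret chain_super n k y W using y W by unfold_locales auto
    show "positive_recurrent n k y" by (rule pos_rec)
  qed
qed

end
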